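(* Consider the ARLOD model on a finite connected graph $G$ with $N\ge 2$ agents, learning rate $\alpha\in(0,1)$, exploration rate $\epsilon\in(0,1)$, and any initial Q-values in $[-1,1]$. Then $$\mathbb{P}\big(\exists\, t_1<\infty \text{ and } o\in\{-1,1\} : Q^i_o(t_1)>Q^i_{-o}(t_1)\ \ \forall i\in\{1,\dots,N\}\big)>0.$$
   Context: The ARLOD (asymmetric reinforcement learning for opinion dynamics) model: $G=(V,E)$ is a finite simple undirected graph on vertex set $V=\{1,\dots,N\}$ (agents); $N(i)=\{u:(u,i)\in E\}$ is the neighbourhood of $i$. Each agent $i$ holds two Q-values $Q^i_{1}(t),Q^i_{-1}(t)\in\mathbb{R}$, initialized in $[-1,1]$. The favoured opinion of agent $i$ at time $t$ is $1$ if $Q^i_1(t)\ge Q^i_{-1}(t)$ and $-1$ otherwise. In each discrete round $t$: an agent $i$ is chosen uniformly at random from $V$; $i$ chooses a neighbour $j\in N(i)$ uniformly at random; $i$ expresses an opinion $o_i(t)$, equal to its favoured opinion with probability $1-\epsilon$ and to the other opinion with probability $\epsilon$; $j$ responds with $R_j=1$ if $o_i(t)$ equals $j$'s favoured opinion and $R_j=-1$ otherwise; then only agent $i$ updates, via $Q^i_{o_i(t)}(t+1)=(1-\alpha)Q^i_{o_i(t)}(t)+\alpha R_j$ and $Q^i_{-o_i(t)}(t+1)=Q^i_{-o_i(t)}(t)$. All other agents' Q-values are unchanged in that round. *)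

theory Defs
  imports "HOL-Probability.Probability"
begin

definition simple_graph :: "nat \<Rightarrow> (nat \<times> nat) set \<Rightarrow> bool" where
  "simple_graph N E \<longleftrightarrow> E \<subseteq> {1..N} \<times> {1..N} \<and> sym E \<and> irrefl E"

definition connected_graph :: "nat \<Rightarrow> (nat \<times> nat) set \<Rightarrow> bool" where
  "connected_graph N E \<longleftrightarrow> (\<forall>u\<in>{1..N}. \<forall>v\<in>{1..N}. (u, v) \<in> E\<^sup>*)"

definition nbhd :: "(nat \<times> nat) set \<Rightarrow> nat \<Rightarrow> nat set" where
  "nbhd E i = {u. (u, i) \<in> E}"

text \<open>Q-values: Q i o for agent i and opinion o \<in> {-1,1}.\<close>
type_synonym qstate = "nat \<Rightarrow> int \<Rightarrow> real"

definition favoured :: "qstate \<Rightarrow> nat \<Rightarrow> int" where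
  "favoured Q i = (if Q i 1 \<ge> Q i (-1) then 1 else -1)"

text \<open>Randomness of one round: (speaker i, listener j) and an exploration flag
  (True = express the non-favoured opinion). It is state-independent.\<close>
definition round_pmf :: "nat \<Rightarrow> (nat \<times> nat) set \<Rightarrow> real \<Rightarrow> ((nat \<times> nat) \<times> bool) pmf" where
  "round_pmf N E \<epsilon> =
     pair_pmf (bind_pmf (pmf_of_set {1..N}) (\<lambda>i. map_pmf (\<lambda>j. (i, j)) (pmf_of_set (nbhd E i))))
              (bernoulli_pmf \<epsilon>)"

definition arlod_update :: "real \<Rightarrow> ((nat \<times> nat) \<times> bool) \<Rightarrow> qstate \<Rightarrow> qstate" where
  "arlod_update \<alpha> r Q =
     (let i = fst (fst r); j = snd (fst r); ex = snd r;
          o' = (if ex then - favoured Q i else favoured Q i);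
          R = (if o' = favoured Q j then (1::real) else -1)
      in Q(i := (Q i)(o' := (1 - \<alpha>) * Q i o' + \<alpha> * R)))"

primrec arlod_traj :: "real \<Rightarrow> qstate \<Rightarrow> (nat \<Rightarrow> (nat \<times> nat) \<times> bool) \<Rightarrow> nat \<Rightarrow> qstate" where
  "arlod_traj \<alpha> Q0 \<omega> 0 = Q0"
| "arlod_traj \<alpha> Q0 \<omega> (Suc t) = arlod_update \<alpha> (\<omega> t) (arlod_traj \<alpha> Q0 \<omega> t)"

definition arlod_space :: "nat \<Rightarrow> (nat \<times> nat) set \<Rightarrow> real \<Rightarrow> (nat \<Rightarrow> (nat \<times> nat) \<times> bool) measure" where
  "arlod_space N E \<epsilon> = PiM UNIV (\<lambda>_::nat. measure_pmf (round_pmf N E \<epsilon>))"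

definition consensus :: "nat \<Rightarrow> qstate \<Rightarrow> bool" where
  "consensus N Q \<longleftrightarrow> (\<exists>op\<in>{-1, 1::int}. \<forall>i\<in>{1..N}. Q i op > Q i (-op))"

end

theory Submission
  imports Defs
begin

definition runL :: "real \<Rightarrow> qstate \<Rightarrow> ((nat \<times> nat) \<times> bool) list \<Rightarrow> qstate" where
  "runL \<alpha> Q rs = foldl (\<lambda>Q r. arlod_update \<alpha> r Q) Q rs"

definition goodr :: "nat \<Rightarrow> (nat \<times> nat) set \<Rightarrow> real \<Rightarrow> ((nat \<times> nat) \<times> bool) \<Rightarrow> bool" where
  "goodr N E \<epsilon> r \<longleftrightarrow> pmf (round_pmf N E \<epsilon>) r > 0"

lemma runL_Cons: "runL \<alpha> Q (r # rs) = runL \<alpha> (arlod_update \<alpha> r Q) rs"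
  by (simp add: runL_def)

lemma runL_append: "runL \<alpha> Q (rs1 @ rs2) = runL \<alpha> (runL \<alpha> Q rs1) rs2"
  by (simp add: runL_def)

lemma traj_runL: "arlod_traj \<alpha> Q0 \<omega> t = runL \<alpha> Q0 (map \<omega> [0..<t])"
  by (induction t) (simp_all add: runL_def)

lemma favoured_range: "favoured Q i \<in> {-1, 1}" by (simp add: favoured_def)

lemma favoured_strict: assumes "oq \<in> {-1,1::int}" "Q i oq > Q i (-oq)" shows "favoured Q i = oq"
  using assms by (auto simp: favoured_def)

lemma update_express:
  assumes "p \<in> {-1,1::int}" "i \<noteq> j"
  shows "arlod_update \<alpha> ((i,j), favoured Q i \<noteq> p) Q =
     Q(i := (Q i)(p := (1-\<alpha>) * Q i p + \<alpha> * (if p = favoured Q j then 1 else -1)))"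
proof -
  have "(if favoured Q i \<noteq> p then - favoured Q i else favoured Q i) = p"
    using assms(1) favoured_range[of Q i] by auto
  then show ?thesis by (simp add: arlod_update_def Let_def)
qed

lemma good_round:
  assumes "simple_graph N E" "0<\<epsilon>" "\<epsilon><1" "i \<in> {1..N}" "(j,i) \<in> E"
  shows "goodr N E \<epsilon> ((i,j),b)"
proof -
  have fin: "finite (nbhd E i)"
    by (rule finite_subset[of _ "{1..N}"]) (use assms(1) in \<open>auto simp: simple_graph_def nbhd_def\<close>)
  have j: "j \<in> nbhd E i" using assms(5) by (simp add: nbhd_def)
  then have ne: "nbhd E i \<noteq> {}" by auto
  have iN: "i \<in> set_pmf (pmf_of_set {1..N})" using assms(4) by auto
  have "(i,j) \<in> set_pmf (map_pmf (\<lambda>j. (i, j)) (pmf_of_set (nbhd E i)))"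
    using fin j ne by simp
  then have "(i,j) \<in> set_pmf (bind_pmf (pmf_of_set {1..N}) (\<lambda>i. map_pmf (\<lambda>j. (i, j)) (pmf_of_set (nbhd E i))))"
    using iN unfolding set_bind_pmf by blast
  then have "((i,j),b) \<in> set_pmf (round_pmf N E \<epsilon>)"
    using assms(2,3) unfolding round_pmf_def set_pair_pmf by simp
  then show ?thesis by (simp add: goodr_def pmf_positive)
qed

lemma iterate:
  assumes p: "p \<in> {-1,1::int}" and ij: "i \<noteq> j" and gr: "simple_graph N E" "0<\<epsilon>" "\<epsilon><1" "i \<in> {1..N}" "(j,i) \<in> E"
  shows "s = (if p = favoured Q j then 1 else -1) \<Longrightarrow> \<exists>rs. (\<forall>r\<in>set rs. goodr N E \<epsilon> r) \<and>
     runL \<alpha> Q rs = Q(i := (Q i)(p := s - (1-\<alpha>)^n * (s - Q i p)))"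
proof (induction n arbitrary: Q)
  case 0
  then show ?case by (intro exI[of _ "[]"]) (simp add: runL_def)
next
  case (Suc n)
  define r where "r = ((i,j), favoured Q i \<noteq> p)"
  define Q1 where "Q1 = arlod_update \<alpha> r Q"
  have Q1: "Q1 = Q(i := (Q i)(p := (1-\<alpha>) * Q i p + \<alpha> * s))"
    unfolding Q1_def r_def using update_express[OF p ij, of \<alpha> Q] Suc.prems by simp
  have "favoured Q1 j = favoured Q j" using ij by (simp add: Q1 favoured_def)
  then have "s = (if p = favoured Q1 j then 1 else -1)" using Suc.prems by simp
  from Suc.IH[OF this] obtain rs where rs: "\<forall>r\<in>set rs. goodr N E \<epsilon> r"
    "runL \<alpha> Q1 rs = Q1(i := (Q1 i)(p := s - (1-\<alpha>)^n * (s - Q1 i p)))"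
    by blast
  have A: "runL \<alpha> Q (r # rs) = Q(i := (Q i)(p := s - (1-\<alpha>)^Suc n * (s - Q i p)))"
    unfolding runL_Cons Q1_def[symmetric] rs(2) by (simp add: Q1 algebra_simps)
  have B: "goodr N E \<epsilon> r" unfolding r_def by (rule good_round[OF gr])
  show ?case
  proof (intro exI[of _ "r # rs"] conjI)
    show "\<forall>x\<in>set (r # rs). goodr N E \<epsilon> x" using B rs(1) by simp
  qed (rule A)
qed

lemma convert:
  assumes oq: "oq \<in> {-1,1::int}" and ij: "i \<noteq> j" and gr: "simple_graph N E" "0<\<epsilon>" "\<epsilon><1" "i \<in> {1..N}" "(j,i) \<in> E"
    and a: "0 < \<alpha>" "\<alpha> < 1" and fj: "favoured Q j = oq"
  shows "\<exists>rs. (\<forall>r\<in>set rs. goodr N E \<epsilon> r) \<and> runL \<alpha> Q rs i oq > runL \<alpha> Q rs i (-oq)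
     \<and> (\<forall>k. k \<noteq> i \<longrightarrow> runL \<alpha> Q rs k = Q k)"
proof -
  define q1 where "q1 = Q i oq"
  define q2 where "q2 = Q i (-oq)"
  define K where "K = \<bar>2 - q1 + q2\<bar> + 1"
  have K: "K > 0" by (simp add: K_def)
  obtain n where n: "(1-\<alpha>)^n < 2 / K" using real_arch_pow_inv[of "2/K" "1-\<alpha>"] K a by auto
  define c where "c = (1-\<alpha>)^n"
  have c0: "c \<ge> 0" using a by (simp add: c_def)
  have oo: "oq \<noteq> -oq" using oq by auto
  have mo: "-oq \<in> {-1,1::int}" using oq by auto
  obtain rs1 where rs1: "\<forall>r\<in>set rs1. goodr N E \<epsilon> r"
    "runL \<alpha> Q rs1 = Q(i := (Q i)(oq := 1 - c * (1 - Q i oq)))"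
    using iterate[OF oq ij gr, of 1 Q \<alpha> n] fj c_def by auto
  define Q1 where "Q1 = runL \<alpha> Q rs1"
  have f1: "favoured Q1 j = oq" using ij fj by (simp add: Q1_def rs1(2) favoured_def)
  obtain rs2 where rs2: "\<forall>r\<in>set rs2. goodr N E \<epsilon> r"
    "runL \<alpha> Q1 rs2 = Q1(i := (Q1 i)(-oq := -1 - c * (-1 - Q1 i (-oq))))"
    using iterate[OF mo ij gr, of "-1" Q1 \<alpha> n] f1 oo c_def by auto
  have R: "runL \<alpha> Q (rs1 @ rs2) = runL \<alpha> Q1 rs2" by (simp add: runL_append Q1_def)
  have v1: "runL \<alpha> Q (rs1 @ rs2) i oq = 1 - c * (1 - q1)"
    using oo unfolding R rs2(2) by (simp add: Q1_def rs1(2) q1_def)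
  have v2: "runL \<alpha> Q (rs1 @ rs2) i (-oq) = -1 + c * (1 + q2)"
    using oo unfolding R rs2(2) by (simp add: Q1_def rs1(2) q2_def algebra_simps)
  have "c * K < 2" using n K by (simp add: c_def field_simps)
  moreover have "c * (2 - q1 + q2) \<le> c * K"
    using c0 by (intro mult_left_mono) (auto simp: K_def)
  ultimately have "c * (2 - q1 + q2) < 2" by linarith
  then have ineq: "1 - c * (1 - q1) > -1 + c * (1 + q2)" by (simp add: algebra_simps)
  have others: "\<forall>k. k \<noteq> i \<longrightarrow> runL \<alpha> Q (rs1 @ rs2) k = Q k"
    unfolding R rs2(2) by (simp add: Q1_def rs1(2))
  show ?thesis using rs1(1) rs2(1) v1 v2 ineq others
    by (intro exI[of _ "rs1 @ rs2"]) auto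
qed

lemma crossing: "(u,v) \<in> E\<^sup>* \<Longrightarrow> u \<in> S \<Longrightarrow> v \<notin> S \<Longrightarrow> \<exists>x y. (x,y)\<in>E \<and> x\<in>S \<and> y\<notin>S"
proof (induction rule: rtrancl_induct)
  case base
  then show ?case by simp
next
  case (step y z)
  show ?case
  proof (cases "y \<in> S")
    case True
    then show ?thesis using step.hyps(2) step.prems(2) by blast
  next
    case False
    then show ?thesis using step.IH step.prems(1) by blast
  qed
qed

lemma spread:
  assumes oq: "oq \<in> {-1,1::int}" and gr: "simple_graph N E" "connected_graph N E" "0<\<epsilon>" "\<epsilon><1"
    and a: "0 < \<alpha>" "\<alpha> < 1"
  shows "card ({1..N} - {i\<in>{1..N}. Q i oq > Q i (-oq)}) = n \<Longrightarrow> {i\<in>{1..N}. Q i oq > Q i (-oq)} \<noteq> {} \<Longrightarrow>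
     \<exists>rs. (\<forall>r\<in>set rs. goodr N E \<epsilon> r) \<and> (\<forall>i\<in>{1..N}. runL \<alpha> Q rs i oq > runL \<alpha> Q rs i (-oq))"
proof (induction n arbitrary: Q)
  case 0
  then have "{1..N} - {i\<in>{1..N}. Q i oq > Q i (-oq)} = {}" by simp
  then show ?case by (intro exI[of _ "[]"]) (auto simp: runL_def)
next
  case (Suc m)
  define S where "S = {i\<in>{1..N}. Q i oq > Q i (-oq)}"
  have cS: "card ({1..N} - S) = Suc m" using Suc.prems(1) unfolding S_def .
  obtain v where v: "v \<in> {1..N} - S" using cS by (metis card.empty ex_in_conv nat.distinct(1))
  obtain u where u: "u \<in> S" using Suc.prems(2) unfolding S_def by blast
  have "(u,v) \<in> E\<^sup>*" using gr(2) u v unfolding connected_graph_def S_def by auto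
  moreover have vS: "v \<notin> S" using v by simp
  ultimately obtain x y where xy: "(x,y)\<in>E" "x\<in>S" "y\<notin>S" using crossing[of u v E S] u by blast
  have Esub: "E \<subseteq> {1..N} \<times> {1..N}" using gr(1) by (simp add: simple_graph_def)
  have yN: "y \<in> {1..N}" using xy(1) Esub by auto
  have xy_ne: "y \<noteq> x" using xy by auto
  have fx: "favoured Q x = oq" using xy(2) oq by (intro favoured_strict) (auto simp: S_def)
  obtain rs1 where rs1: "\<forall>r\<in>set rs1. goodr N E \<epsilon> r" "runL \<alpha> Q rs1 y oq > runL \<alpha> Q rs1 y (-oq)"
     "\<forall>k. k \<noteq> y \<longrightarrow> runL \<alpha> Q rs1 k = Q k"
    using convert[OF oq xy_ne gr(1,3,4) yN xy(1) a fx] by blast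
  define Q1 where "Q1 = runL \<alpha> Q rs1"
  have S1: "{i\<in>{1..N}. Q1 i oq > Q1 i (-oq)} = insert y S"
    using rs1(2,3) yN unfolding Q1_def S_def by auto
  have "{1..N} - insert y S = ({1..N} - S) - {y}" by auto
  then have "card ({1..N} - {i\<in>{1..N}. Q1 i oq > Q1 i (-oq)}) = m"
    using Suc.prems(1) xy(3) yN unfolding S1 S_def[symmetric] by simp
  then obtain rs2 where rs2: "\<forall>r\<in>set rs2. goodr N E \<epsilon> r" "\<forall>i\<in>{1..N}. runL \<alpha> Q1 rs2 i oq > runL \<alpha> Q1 rs2 i (-oq)"
    using Suc.IH[of Q1] S1 by auto
  show ?case using rs1(1) rs2 by (intro exI[of _ "rs1 @ rs2"]) (auto simp: runL_append Q1_def)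
qed

lemma comp_sets:
  fixes p :: "((nat\<times>nat)\<times>bool) pmf" and c :: "(nat\<times>nat)\<times>bool" and k :: nat
  shows "{\<omega>\<in>space (PiM UNIV (\<lambda>_. measure_pmf p)). \<omega> k = c} \<in> sets (PiM UNIV (\<lambda>_. measure_pmf p))"
proof -
  have m: "(\<lambda>\<omega>. \<omega> k) \<in> PiM UNIV (\<lambda>_. measure_pmf p) \<rightarrow>\<^sub>M measure_pmf p"
    by (rule measurable_component_singleton) simp
  have "(\<lambda>\<omega>. \<omega> k) -` {c} \<inter> space (PiM UNIV (\<lambda>_. measure_pmf p)) \<in> sets (PiM UNIV (\<lambda>_. measure_pmf p))"
    by (rule measurable_sets[OF m]) simp
  moreover have "(\<lambda>\<omega>. \<omega> k) -` {c} \<inter> space (PiM UNIV (\<lambda>_. measure_pmf p))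
      = {\<omega>\<in>space (PiM UNIV (\<lambda>_. measure_pmf p)). \<omega> k = c}" by auto
  ultimately show ?thesis by simp
qed

theorem lemma2:
  fixes N :: nat and E :: "(nat \<times> nat) set" and \<alpha> \<epsilon> :: real and Q0 :: qstate
  assumes "N \<ge> 2"
    and "simple_graph N E" and "connected_graph N E"
    and "0 < \<alpha>" and "\<alpha> < 1" and "0 < \<epsilon>" and "\<epsilon> < 1"
    and "\<forall>i\<in>{1..N}. \<forall>op\<in>{-1, 1::int}. Q0 i op \<in> {-1..1}"
  shows "measure (arlod_space N E \<epsilon>)
           {\<omega> \<in> space (arlod_space N E \<epsilon>). \<exists>t1. consensus N (arlod_traj \<alpha> Q0 \<omega> t1)} > 0"
proof -
  have Esub: "E \<subseteq> {1..N}\<times>{1..N}" using assms(2) by (simp add: simple_graph_def)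
  have "(1::nat,2::nat) \<in> E\<^sup>*" using assms(1,3) by (auto simp: connected_graph_def)
  then obtain b where b: "(1,b) \<in> E" by (cases rule: converse_rtranclE) auto
  have b1: "b \<noteq> 1" using b assms(2) by (auto simp: simple_graph_def irrefl_def)
  have bN: "b \<in> {1..N}" using b Esub by auto
  define oq where "oq = favoured Q0 1"
  have oq: "oq \<in> {-1,1}" using favoured_range oq_def by simp
  obtain rs1 where rs1: "\<forall>r\<in>set rs1. goodr N E \<epsilon> r" "runL \<alpha> Q0 rs1 b oq > runL \<alpha> Q0 rs1 b (-oq)"
    using convert[OF oq b1 assms(2,6,7) bN b assms(4,5), where Q=Q0] oq_def by auto
  define Q1 where "Q1 = runL \<alpha> Q0 rs1"
  have ne: "{i\<in>{1..N}. Q1 i oq > Q1 i (-oq)} \<noteq> {}" using rs1(2) bN Q1_def by auto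
  obtain rs2 where rs2: "\<forall>r\<in>set rs2. goodr N E \<epsilon> r" "\<forall>i\<in>{1..N}. runL \<alpha> Q1 rs2 i oq > runL \<alpha> Q1 rs2 i (-oq)"
    using spread[OF oq assms(2,3,6,7,4,5) refl ne] by blast
  define rs where "rs = rs1 @ rs2"
  have good: "\<forall>r\<in>set rs. goodr N E \<epsilon> r" using rs1(1) rs2(1) by (auto simp: rs_def)
  have cons: "consensus N (runL \<alpha> Q0 rs)"
    unfolding consensus_def using oq rs2(2) by (auto simp: rs_def runL_append Q1_def)
  define M where "M = measure_pmf (round_pmf N E \<epsilon>)"
  define P where "P = arlod_space N E \<epsilon>"
  have P: "P = PiM UNIV (\<lambda>_. M)" by (simp add: P_def M_def arlod_space_def)
  have probP: "prob_space P" unfolding P by (rule prob_space_PiM) (simp add: M_def prob_space_measure_pmf)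
  define T where "T = length rs"
  define C where "C = prod_emb UNIV (\<lambda>_. M) {..<T} (PiE {..<T} (\<lambda>t. {rs!t}))"
  have "emeasure P C = (\<Prod>t\<in>{..<T}. emeasure M {rs!t})"
    unfolding C_def P by (rule emeasure_PiM_emb) (auto simp: M_def prob_space_measure_pmf)
  also have "\<dots> = ennreal (\<Prod>t\<in>{..<T}. pmf (round_pmf N E \<epsilon>) (rs!t))"
    by (simp add: M_def emeasure_pmf_single prod_ennreal)
  finally have eC: "emeasure P C = ennreal (\<Prod>t\<in>{..<T}. pmf (round_pmf N E \<epsilon>) (rs!t))" .
  have pos: "(\<Prod>t\<in>{..<T}. pmf (round_pmf N E \<epsilon>) (rs!t)) > 0"
    using good by (intro prod_pos) (auto simp: T_def goodr_def)
  define A where "A = {\<omega> \<in> space P. \<exists>t1. consensus N (arlod_traj \<alpha> Q0 \<omega> t1)}"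
  have CA: "C \<subseteq> A"
  proof
    fix \<omega> assume "\<omega> \<in> C"
    note w = this
    have sp: "\<omega> \<in> space P" using w prod_emb_subset_PiM unfolding C_def P by blast
    have "\<omega> \<in> (\<Pi> t\<in>{..<T}. {rs ! t})" using w unfolding C_def prod_emb_def by simp
    then have eq: "\<forall>t<T. \<omega> t = rs!t" by (auto simp: Pi_iff)
    have "map \<omega> [0..<T] = rs"
    proof (rule nth_equalityI)
      show "length (map \<omega> [0..<T]) = length rs" by (simp add: T_def)
      fix t assume "t < length (map \<omega> [0..<T])"
      then have "t < T" by simp
      then show "map \<omega> [0..<T] ! t = rs ! t" using eq by simp
    qed
    then have "arlod_traj \<alpha> Q0 \<omega> T = runL \<alpha> Q0 rs" by (simp add: traj_runL)
    then show "\<omega> \<in> A" using sp cons unfolding A_def by (metis (mono_tags, lifting) mem_Collect_eq)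
  qed
  define G where "G t = {xs. length xs = t \<and> consensus N (runL \<alpha> Q0 xs)}" for t
  have AG: "A = {\<omega> \<in> space P. \<exists>t. \<exists>xs\<in>G t. \<forall>k. k < t \<longrightarrow> \<omega> k = xs!k}"
  proof -
    have "consensus N (arlod_traj \<alpha> Q0 \<omega> t) \<longleftrightarrow> (\<exists>xs\<in>G t. \<forall>k. k < t \<longrightarrow> \<omega> k = xs!k)" for \<omega> t
    proof
      assume "consensus N (arlod_traj \<alpha> Q0 \<omega> t)"
      then show "\<exists>xs\<in>G t. \<forall>k. k < t \<longrightarrow> \<omega> k = xs!k"
        by (intro bexI[of _ "map \<omega> [0..<t]"]) (auto simp: G_def traj_runL)
    next
      assume "\<exists>xs\<in>G t. \<forall>k. k < t \<longrightarrow> \<omega> k = xs!k"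
      then obtain xs where xs: "length xs = t" "consensus N (runL \<alpha> Q0 xs)" "\<forall>k. k < t \<longrightarrow> \<omega> k = xs!k"
        by (auto simp: G_def)
      have "map \<omega> [0..<t] = xs"
      proof (rule nth_equalityI)
        show "length (map \<omega> [0..<t]) = length xs" using xs(1) by simp
        fix k assume "k < length (map \<omega> [0..<t])"
        then have "k < t" by simp
        then show "map \<omega> [0..<t] ! k = xs ! k" using xs(3) by simp
      qed
      then show "consensus N (arlod_traj \<alpha> Q0 \<omega> t)" using xs(2) by (simp add: traj_runL)
    qed
    then show ?thesis unfolding A_def by simp
  qed
  have Ameas: "A \<in> sets P"
    unfolding AG P M_def
    by (intro sets.sets_Collect_countable_Ex sets.sets_Collect_countable_Bex sets.sets_Collect_countable_All
        sets.sets_Collect_imp sets.sets_Collect_const comp_sets)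
  have "emeasure P C \<le> emeasure P A" by (rule emeasure_mono[OF CA Ameas])
  moreover have "0 < ennreal (\<Prod>t\<in>{..<T}. pmf (round_pmf N E \<epsilon>) (rs!t))" using pos by simp
  ultimately have "0 < emeasure P A" using eC by (metis less_le_trans)
  moreover have "emeasure P A = ennreal (measure P A)"
    using probP by (simp add: prob_space_def finite_measure.emeasure_eq_measure)
  ultimately show ?thesis unfolding A_def P_def by simp
qed

end
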